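(* Let $E$ be a finite nonempty set, $f:2^E\to\mathbb{N}$ an integral polymatroid rank function, and let $C_e:\mathbb{N}\times\mathbb{N}\to\mathbb{R}_+$, $e\in E$, be regular functions. Let $D\subseteq\mathbb{N}$ be a set of integers with $\mathbb{B}_f(d)\neq\emptyset$ for all $d\in D$. Then for every $\vec t\in\mathbb{N}^E$, every $d\in D$, every optimal solution $\vec x^*(\vec t,d)$ of $P(\vec t,d)$, every $d'\in D$ and every $\vec t'\in\mathbb{N}^E$, there is an optimal solution $\vec x^*(\vec t',d')$ of $P(\vec t',d')$ with $\|\vec x^*(\vec t,d)-\vec x^*(\vec t',d')\|\le 2\|\vec t-\vec t'\|+|d-d'|$.
   Context: $\mathbb{N}=\{0,1,2,\dots\}$. A set function $f:2^E\to\mathbb{N}$ is an integral polymatroid rank function if $f(\emptyset)=0$, $f$ is monotone and submodular. For $\vec x\in\mathbb{N}^E$, $x(U)=\sum_{e\in U}x_e$; $\mathbb{B}_f(d)=\{\vec x\in\mathbb{N}^E: x(U)\le f(U)\ \forall U\subseteq E,\ x(E)=d\}$. $P(\vec t,d)$: minimize $\sum_{e\in E}C_e(x_e;t_e)$ subject to $\vec x\in\mathbb{B}_f(d)$. $\|\cdot\|$ is the $L_1$-norm. For $C:\mathbb{N}\times\mathbb{N}\to\mathbb{R}$, $C^-(x;t)=C(x;t)-C(x-1;t)$ for $x\ge1$; $C$ is regular if $C^-(x;t)\le C^-(x;t+1)$ and $C^-(x;t+1)\le C^-(x+1;t)$ for all $x\ge1$, $t\in\mathbb{N}$. *)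

theory Defs
  imports "HOL-Analysis.Analysis"
begin

definition polymatroid_rank :: "'a set \<Rightarrow> ('a set \<Rightarrow> nat) \<Rightarrow> bool" where
  "polymatroid_rank E f \<longleftrightarrow>
     f {} = 0 \<and>
     (\<forall>U V. U \<subseteq> V \<and> V \<subseteq> E \<longrightarrow> f U \<le> f V) \<and>
     (\<forall>U V. U \<subseteq> E \<and> V \<subseteq> E \<longrightarrow> f (U \<union> V) + f (U \<inter> V) \<le> f U + f V)"

definition vecs :: "'a set \<Rightarrow> ('a \<Rightarrow> nat) set" where
  "vecs E = {x. \<forall>e. e \<notin> E \<longrightarrow> x e = 0}"

definition base :: "'a set \<Rightarrow> ('a set \<Rightarrow> nat) \<Rightarrow> nat \<Rightarrow> ('a \<Rightarrow> nat) set" where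
  "base E f d = {x \<in> vecs E. (\<forall>U. U \<subseteq> E \<longrightarrow> (\<Sum>e\<in>U. x e) \<le> f U) \<and> (\<Sum>e\<in>E. x e) = d}"

definition Cminus :: "(nat \<Rightarrow> nat \<Rightarrow> real) \<Rightarrow> nat \<Rightarrow> nat \<Rightarrow> real" where
  "Cminus C x t = C x t - C (x - 1) t"

definition regular :: "(nat \<Rightarrow> nat \<Rightarrow> real) \<Rightarrow> bool" where
  "regular C \<longleftrightarrow> (\<forall>x t. x \<ge> 1 \<longrightarrow>
      Cminus C x t \<le> Cminus C x (Suc t) \<and> Cminus C x (Suc t) \<le> Cminus C (Suc x) t)"

definition cost :: "'a set \<Rightarrow> ('a \<Rightarrow> nat \<Rightarrow> nat \<Rightarrow> real) \<Rightarrow> ('a \<Rightarrow> nat) \<Rightarrow> ('a \<Rightarrow> nat) \<Rightarrow> real" where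
  "cost E C t x = (\<Sum>e\<in>E. C e (x e) (t e))"

definition optimal :: "'a set \<Rightarrow> ('a set \<Rightarrow> nat) \<Rightarrow> ('a \<Rightarrow> nat \<Rightarrow> nat \<Rightarrow> real)
     \<Rightarrow> ('a \<Rightarrow> nat) \<Rightarrow> nat \<Rightarrow> ('a \<Rightarrow> nat) \<Rightarrow> bool" where
  "optimal E f C t d x \<longleftrightarrow> x \<in> base E f d \<and> (\<forall>y \<in> base E f d. cost E C t x \<le> cost E C t y)"

definition l1dist :: "'a set \<Rightarrow> ('a \<Rightarrow> nat) \<Rightarrow> ('a \<Rightarrow> nat) \<Rightarrow> nat" where
  "l1dist E x y = (\<Sum>e\<in>E. nat \<bar>int (x e) - int (y e)\<bar>)"

end

theory Submission
  imports Defs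
begin


definition inP :: "'a set \<Rightarrow> ('a set \<Rightarrow> nat) \<Rightarrow> ('a \<Rightarrow> nat) \<Rightarrow> bool" where
  "inP E f z \<longleftrightarrow> z \<in> vecs E \<and> (\<forall>U. U \<subseteq> E \<longrightarrow> sum z U \<le> f U)"

lemma base_iff: "z \<in> base E f d \<longleftrightarrow> inP E f z \<and> sum z E = d"
  by (auto simp: base_def inP_def)

lemma vecs_nz: "z \<in> vecs E \<Longrightarrow> z e \<noteq> 0 \<Longrightarrow> e \<in> E"
  by (auto simp: vecs_def)

lemma sum_upd2:
  fixes z :: "'a \<Rightarrow> nat"
  assumes "finite U" "a \<noteq> b" "z a \<ge> 1"
  shows "sum (z(a := z a - 1, b := z b + 1)) U + (if a \<in> U then 1 else 0)
       = sum z U + (if b \<in> U then 1 else 0)"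
proof -
  have "\<forall>e. (z(a := z a - 1, b := z b + 1)) e + (if e = a then 1 else 0)
       = z e + (if e = b then (1::nat) else 0)" using assms by auto
  hence "(\<Sum>e\<in>U. (z(a := z a - 1, b := z b + 1)) e + (if e = a then 1 else 0))
       = (\<Sum>e\<in>U. z e + (if e = b then (1::nat) else 0))" by simp
  thus ?thesis using assms(1) by (simp add: sum.distrib)
qed

lemma cost_upd2:
  assumes "finite E" "a \<in> E" "b \<in> E" "a \<noteq> b" "z a \<ge> 1"
  shows "cost E C t (z(a := z a - 1, b := z b + 1))
       = cost E C t z - Cminus (C a) (z a) (t a) + Cminus (C b) (z b + 1) (t b)"
proof -
  have "\<forall>e. C e ((z(a := z a - 1, b := z b + 1)) e) (t e)
      = C e (z e) (t e) + (if e = a then C a (z a - 1) (t a) - C a (z a) (t a) else 0)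
        + (if e = b then C b (z b + 1) (t b) - C b (z b) (t b) else 0)" using assms by auto
  hence "cost E C t (z(a := z a - 1, b := z b + 1)) = (\<Sum>e\<in>E. C e (z e) (t e) + (if e = a then C a (z a - 1) (t a) - C a (z a) (t a) else 0)
        + (if e = b then C b (z b + 1) (t b) - C b (z b) (t b) else 0))"
    unfolding cost_def by simp
  also have "\<dots> = cost E C t z - Cminus (C a) (z a) (t a) + Cminus (C b) (z b + 1) (t b)"
    using assms unfolding cost_def Cminus_def by (simp add: sum.distrib)
  finally show ?thesis .
qed

lemma dist_upd2:
  assumes "finite E" "a \<in> E" "b \<in> E" "y a > x a" "x b > y b"
  shows "l1dist E x (y(a := y a - 1, b := y b + 1)) + 2 = l1dist E x y"
proof -
  have ab: "a \<noteq> b" using assms by auto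
  have "\<forall>e. nat \<bar>int (x e) - int ((y(a := y a - 1, b := y b + 1)) e)\<bar> + (if e = a then 1 else 0) + (if e = b then 1 else 0)
      = nat \<bar>int (x e) - int (y e)\<bar>" using assms ab by auto
  hence "(\<Sum>e\<in>E. nat \<bar>int (x e) - int ((y(a := y a - 1, b := y b + 1)) e)\<bar> + (if e = a then 1 else 0) + (if e = b then 1 else 0))
      = l1dist E x y" unfolding l1dist_def by simp
  thus ?thesis using assms unfolding l1dist_def by (simp add: sum.distrib)
qed

lemma dist_parts:
  "l1dist E x y = (\<Sum>e\<in>E. y e - x e) + (\<Sum>e\<in>E. x e - y e)"
  "sum y E + (\<Sum>e\<in>E. x e - y e) = sum x E + (\<Sum>e\<in>E. y e - x e)"
proof -
  have "l1dist E x y = (\<Sum>e\<in>E. (y e - x e) + (x e - y e))"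
    unfolding l1dist_def by (rule sum.cong) auto
  thus "l1dist E x y = (\<Sum>e\<in>E. y e - x e) + (\<Sum>e\<in>E. x e - y e)" by (simp add: sum.distrib)
  have "(\<Sum>e\<in>E. y e + (x e - y e)) = (\<Sum>e\<in>E. x e + (y e - x e))"
    by (rule sum.cong) auto
  thus "sum y E + (\<Sum>e\<in>E. x e - y e) = sum x E + (\<Sum>e\<in>E. y e - x e)" by (simp add: sum.distrib)
qed

lemma l1dist_tri: "l1dist E x z \<le> l1dist E x y + l1dist E y z"
  unfolding l1dist_def sum.distrib[symmetric] by (rule sum_mono) auto

lemma tdist_up:
  assumes "finite E" "k \<in> E" "t k < t' k"
  shows "l1dist E (t(k := t k + 1)) t' + 1 = l1dist E t t'"
proof -
  have "\<forall>e. nat \<bar>int ((t(k := t k + 1)) e) - int (t' e)\<bar> + (if e = k then 1 else 0) = nat \<bar>int (t e) - int (t' e)\<bar>"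
    using assms by auto
  hence "(\<Sum>e\<in>E. nat \<bar>int ((t(k := t k + 1)) e) - int (t' e)\<bar> + (if e = k then 1 else 0)) = l1dist E t t'"
    unfolding l1dist_def by simp
  thus ?thesis using assms unfolding l1dist_def by (simp add: sum.distrib)
qed

lemma tdist_down:
  assumes "finite E" "k \<in> E" "t k > t' k"
  shows "l1dist E (t(k := t k - 1)) t' + 1 = l1dist E t t'"
proof -
  have "\<forall>e. nat \<bar>int ((t(k := t k - 1)) e) - int (t' e)\<bar> + (if e = k then 1 else 0) = nat \<bar>int (t e) - int (t' e)\<bar>"
    using assms by auto
  hence "(\<Sum>e\<in>E. nat \<bar>int ((t(k := t k - 1)) e) - int (t' e)\<bar> + (if e = k then 1 else 0)) = l1dist E t t'"
    unfolding l1dist_def by simp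
  thus ?thesis using assms unfolding l1dist_def by (simp add: sum.distrib)
qed

lemma reg_t: "regular C \<Longrightarrow> a \<ge> 1 \<Longrightarrow> Cminus C a s \<le> Cminus C a (s + k)"
proof (induction k)
  case (Suc k)
  then have "Cminus C a (s + k) \<le> Cminus C a (Suc (s + k))" unfolding regular_def by blast
  with Suc show ?case by simp
qed simp

lemma reg_diag: "regular C \<Longrightarrow> a \<ge> 1 \<Longrightarrow> Cminus C a (s + k) \<le> Cminus C (a + k) s"
proof (induction k arbitrary: a)
  case (Suc k)
  then have "Cminus C a (Suc (s + k)) \<le> Cminus C (Suc a) (s + k)" unfolding regular_def by blast
  moreover have "Cminus C (Suc a) (s + k) \<le> Cminus C (Suc a + k) s" using Suc.IH[of "Suc a"] Suc.prems by simp
  ultimately show ?case by simp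
qed simp

lemma reg_mono:
  assumes "regular C" "1 \<le> a" "a \<le> a'" "a + s \<le> a' + s'"
  shows "Cminus C a s \<le> Cminus C a' s'"
proof -
  define k where "k = a' - a"
  have "Cminus C a s \<le> Cminus C a (s + (s' + k - s))" by (rule reg_t[OF assms(1,2)])
  also have "s + (s' + k - s) = s' + k" using assms unfolding k_def by simp
  also have "Cminus C a (s' + k) \<le> Cminus C (a + k) s'" by (rule reg_diag[OF assms(1,2)])
  also have "a + k = a'" using assms unfolding k_def by simp
  finally show ?thesis .
qed




locale pm =
  fixes E :: "'a set" and f :: "'a set \<Rightarrow> nat" and C :: "'a \<Rightarrow> nat \<Rightarrow> nat \<Rightarrow> real"
  assumes finE: "finite E" and poly: "polymatroid_rank E f"
    and reg: "\<And>e. e \<in> E \<Longrightarrow> regular (C e)"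
begin

lemma f_empty: "f {} = 0" using poly unfolding polymatroid_rank_def by blast

lemma submod: "U \<subseteq> E \<Longrightarrow> V \<subseteq> E \<Longrightarrow> f (U \<union> V) + f (U \<inter> V) \<le> f U + f V"
  using poly unfolding polymatroid_rank_def by blast

lemma tight_un_int:
  assumes "inP E f z" "U \<subseteq> E" "V \<subseteq> E" "sum z U = f U" "sum z V = f V"
  shows "sum z (U \<union> V) = f (U \<union> V) \<and> sum z (U \<inter> V) = f (U \<inter> V)"
proof -
  have fin: "finite U" "finite V" using assms finE finite_subset by auto
  have "sum z (U \<union> V) + sum z (U \<inter> V) = sum z U + sum z V"
    using sum.union_inter[OF fin] .
  moreover have "sum z (U \<union> V) \<le> f (U \<union> V)" "sum z (U \<inter> V) \<le> f (U \<inter> V)"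
  proof -
    have "U \<union> V \<subseteq> E" "U \<inter> V \<subseteq> E" using assms by auto
    then show "sum z (U \<union> V) \<le> f (U \<union> V)" "sum z (U \<inter> V) \<le> f (U \<inter> V)"
      using assms(1) unfolding inP_def by auto
  qed
  moreover have "f (U \<union> V) + f (U \<inter> V) \<le> f U + f V" using submod assms by blast
  ultimately show ?thesis using assms by linarith
qed

lemma tight_Union:
  assumes "inP E f z" "finite F" "\<forall>U\<in>F. U \<subseteq> E \<and> sum z U = f U"
  shows "\<Union>F \<subseteq> E \<and> sum z (\<Union>F) = f (\<Union>F)"
  using assms(2,3)
proof (induction F rule: finite_induct)
  case empty
  then show ?case using f_empty by simp
next
  case (insert A F)
  then show ?case using tight_un_int[OF assms(1), of A "\<Union>F"] by auto
qed

lemma tight_Inter: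
  assumes "inP E f z" "finite F" "F \<noteq> {}" "\<forall>U\<in>F. U \<subseteq> E \<and> sum z U = f U"
  shows "\<Inter>F \<subseteq> E \<and> sum z (\<Inter>F) = f (\<Inter>F)"
  using assms(2,3,4)
proof (induction F rule: finite_ne_induct)
  case (singleton x)
  then show ?case by simp
next
  case (insert A F)
  then show ?case using tight_un_int[OF assms(1), of A "\<Inter>F"] by auto
qed

lemma upd_inP:
  assumes "inP E f z" "a \<in> E" "b \<in> E" "a \<noteq> b" "z a \<ge> 1"
    and strict: "\<And>U. U \<subseteq> E \<Longrightarrow> b \<in> U \<Longrightarrow> a \<notin> U \<Longrightarrow> sum z U < f U"
  shows "inP E f (z(a := z a - 1, b := z b + 1))"
  unfolding inP_def
proof (intro conjI allI impI)
  show "z(a := z a - 1, b := z b + 1) \<in> vecs E"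
    using assms(1-3) unfolding inP_def vecs_def by auto
next
  fix U assume U: "U \<subseteq> E"
  have fin: "finite U" using U finE finite_subset by auto
  have eq: "sum (z(a := z a - 1, b := z b + 1)) U + (if a \<in> U then 1 else 0)
       = sum z U + (if b \<in> U then 1 else 0)" using sum_upd2[of U a b z] fin assms(4,5) by blast
  have le: "sum z U \<le> f U" using assms(1) U unfolding inP_def by auto
  show "sum (z(a := z a - 1, b := z b + 1)) U \<le> f U"
  proof (cases "b \<in> U \<and> a \<notin> U")
    case True
    then show ?thesis using eq strict[OF U] by auto
  next
    case False
    then show ?thesis using eq le by (auto split: if_splits)
  qed
qed

lemma exch:
  assumes x: "inP E f x" and y: "inP E f y" and xi: "x i > y i" and s: "sum x E \<le> sum y E"
  shows "\<exists>j. y j > x j \<and> inP E f (x(i := x i - 1, j := x j + 1))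
             \<and> inP E f (y(j := y j - 1, i := y i + 1))"
proof -
  have iE: "i \<in> E" using x xi vecs_nz unfolding inP_def by fastforce
  define F where "F = {U. U \<subseteq> E \<and> sum x U = f U \<and> i \<notin> U}"
  define M where "M = \<Union>F"
  have finF: "finite F" unfolding F_def by (rule finite_subset[of _ "Pow E"]) (use finE in auto)
  have M: "M \<subseteq> E" "sum x M = f M" using tight_Union[OF x finF] unfolding M_def F_def by auto
  have iM: "i \<notin> M" unfolding M_def F_def by auto
  have xupd: "inP E f (x(i := x i - 1, j := x j + 1))" if j: "y j > x j" "j \<notin> M" for j
  proof -
    have jE: "j \<in> E" using y j vecs_nz unfolding inP_def by fastforce
    show ?thesis
    proof (rule upd_inP[OF x iE jE])
      show "i \<noteq> j" using j xi by auto
      show "1 \<le> x i" using xi by auto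
      fix U assume U: "U \<subseteq> E" "j \<in> U" "i \<notin> U"
      have "sum x U \<noteq> f U"
      proof
        assume "sum x U = f U"
        then have "U \<in> F" using U unfolding F_def by auto
        then have "U \<subseteq> M" unfolding M_def by auto
        then show False using U j by auto
      qed
      moreover have "sum x U \<le> f U" using x U unfolding inP_def by auto
      ultimately show "sum x U < f U" by simp
    qed
  qed
  have finS: "finite S" if "S \<subseteq> E" for S using that finE finite_subset by auto
  show ?thesis
  proof (cases "\<exists>U. U \<subseteq> E \<and> sum y U = f U \<and> i \<in> U")
    case True
    define G where "G = {U. U \<subseteq> E \<and> sum y U = f U \<and> i \<in> U}"
    define S where "S = \<Inter>G"
    have finG: "finite G" unfolding G_def by (rule finite_subset[of _ "Pow E"]) (use finE in auto)
    have Gne: "G \<noteq> {}" using True unfolding G_def by auto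
    have S: "S \<subseteq> E" "sum y S = f S" using tight_Inter[OF y finG Gne] unfolding S_def G_def by auto
    have iS: "i \<in> S" unfolding S_def G_def by auto
    have "\<exists>j\<in>S - M. y j > x j"
    proof (rule ccontr)
      assume "\<not> ?thesis"
      then have le: "\<forall>j\<in>S - M. y j \<le> x j" by (auto simp: not_less)
      have lt: "sum y (S - M) < sum x (S - M)"
        by (rule sum_strict_mono_ex1) (use finS[OF _] S le iS iM xi in auto)
      have "sum x (S \<union> M) = sum x M + sum x (S - M)"
        using sum.union_disjoint[of M "S - M" x] finS M S by (simp add: Un_commute Un_Diff_cancel2) 
      moreover have "sum y S = sum y (S \<inter> M) + sum y (S - M)"
        using sum.Int_Diff[of S y M] finS S by simp
      moreover have "S \<inter> M \<subseteq> E" using S by auto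
      then have "sum y (S \<inter> M) \<le> f (S \<inter> M)" using y unfolding inP_def by blast
      moreover have "sum x (S \<union> M) \<le> f (S \<union> M)" using x S M unfolding inP_def by auto
      moreover have "f (S \<union> M) + f (S \<inter> M) \<le> f S + f M" using submod S M by blast
      ultimately show False using lt S M by linarith
    qed
    then obtain j where j: "j \<in> S" "j \<notin> M" "y j > x j" by auto
    have jE: "j \<in> E" using j S by auto
    have "inP E f (y(j := y j - 1, i := y i + 1))"
    proof (rule upd_inP[OF y jE iE])
      show "j \<noteq> i" using j xi by auto
      show "1 \<le> y j" using j by auto
      fix U assume U: "U \<subseteq> E" "i \<in> U" "j \<notin> U"
      have "sum y U \<noteq> f U"
      proof
        assume "sum y U = f U"
        then have "U \<in> G" using U unfolding G_def by auto
        then have "S \<subseteq> U" unfolding S_def by auto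
        then show False using U j by auto
      qed
      moreover have "sum y U \<le> f U" using y U unfolding inP_def by auto
      ultimately show "sum y U < f U" by simp
    qed
    then show ?thesis using xupd j by blast
  next
    case False
    have "\<exists>j\<in>E - M. y j > x j"
    proof (rule ccontr)
      assume "\<not> ?thesis"
      then have le: "\<forall>j\<in>E - M. y j \<le> x j" by (auto simp: not_less)
      have lt: "sum y (E - M) < sum x (E - M)"
        by (rule sum_strict_mono_ex1) (use finE le iE iM xi in auto)
      have "sum x E = sum x M + sum x (E - M)"
        using sum.Int_Diff[of E x M] finE M by (simp add: Int_absorb1)
      moreover have "sum y E = sum y M + sum y (E - M)"
        using sum.Int_Diff[of E y M] finE M by (simp add: Int_absorb1)
      moreover have "sum y M \<le> f M" using y M unfolding inP_def by auto
      ultimately show False using lt s M by linarith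
    qed
    then obtain j where j: "j \<in> E" "j \<notin> M" "y j > x j" by auto
    have "inP E f (y(j := y j - 1, i := y i + 1))"
    proof (rule upd_inP[OF y j(1) iE])
      show "j \<noteq> i" using j xi by auto
      show "1 \<le> y j" using j by auto
      fix U assume U: "U \<subseteq> E" "i \<in> U" "j \<notin> U"
      have "sum y U \<noteq> f U" using False U by auto
      moreover have "sum y U \<le> f U" using y U unfolding inP_def by auto
      ultimately show "sum y U < f U" by simp
    qed
    then show ?thesis using xupd j by blast
  qed
qed

end



context pm
begin

lemma improve:
  assumes ox: "optimal E f C t d x" and oy: "optimal E f C t' d' y"
    and yi: "y i > x i" and xj: "x j > y j"
    and ci: "y i + t' i \<ge> x i + t i + 1" and cj: "x j + t j \<ge> y j + t' j + 1"
    and px: "inP E f (x(j := x j - 1, i := x i + 1))"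
    and py: "inP E f (y(i := y i - 1, j := y j + 1))"
  shows "\<exists>y2. optimal E f C t' d' y2 \<and> l1dist E x y2 < l1dist E x y"
proof -
  have xb: "x \<in> base E f d" and yb: "y \<in> base E f d'" using ox oy unfolding optimal_def by auto
  have iE: "i \<in> E" using yb yi vecs_nz unfolding base_def by fastforce
  have jE: "j \<in> E" using xb xj vecs_nz unfolding base_def by fastforce
  have ij: "i \<noteq> j" using yi xj by auto
  have sx: "sum (x(j := x j - 1, i := x i + 1)) E = d"
    using sum_upd2[of E j i x] finE iE jE ij xj xb by (simp add: base_iff)
  have sy: "sum (y(i := y i - 1, j := y j + 1)) E = d'"
    using sum_upd2[of E i j y] finE iE jE ij yi yb by (simp add: base_iff)
  have x2b: "x(j := x j - 1, i := x i + 1) \<in> base E f d" using px sx by (simp add: base_iff)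
  have y2b: "y(i := y i - 1, j := y j + 1) \<in> base E f d'" using py sy by (simp add: base_iff)
  have "cost E C t x \<le> cost E C t (x(j := x j - 1, i := x i + 1))" using ox x2b unfolding optimal_def by blast
  also have "\<dots> = cost E C t x - Cminus (C j) (x j) (t j) + Cminus (C i) (x i + 1) (t i)"
    by (rule cost_upd2) (use finE iE jE ij xj in auto)
  finally have o1: "Cminus (C j) (x j) (t j) \<le> Cminus (C i) (x i + 1) (t i)" by simp
  have m1: "Cminus (C j) (y j + 1) (t' j) \<le> Cminus (C j) (x j) (t j)"
    by (rule reg_mono[OF reg[OF jE]]) (use xj cj in auto)
  have m2: "Cminus (C i) (x i + 1) (t i) \<le> Cminus (C i) (y i) (t' i)"
    by (rule reg_mono[OF reg[OF iE]]) (use yi ci in auto)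
  have "cost E C t' (y(i := y i - 1, j := y j + 1)) = cost E C t' y - Cminus (C i) (y i) (t' i) + Cminus (C j) (y j + 1) (t' j)"
    by (rule cost_upd2) (use finE iE jE ij yi in auto)
  also have "\<dots> \<le> cost E C t' y" using o1 m1 m2 by linarith
  finally have cle: "cost E C t' (y(i := y i - 1, j := y j + 1)) \<le> cost E C t' y" .
  have "optimal E f C t' d' (y(i := y i - 1, j := y j + 1))"
    unfolding optimal_def using y2b cle oy unfolding optimal_def by (meson order_trans)
  moreover have "l1dist E x (y(i := y i - 1, j := y j + 1)) + 2 = l1dist E x y"
    by (rule dist_upd2) (use finE iE jE yi xj in auto)
  moreover have "l1dist E x (y(i := y i - 1, j := y j + 1)) < l1dist E x y" using calculation(2) by linarith
  ultimately show ?thesis by blast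
qed

lemma base_finite: "finite (base E f d)"
proof -
  have "base E f d \<subseteq> (\<lambda>g e. if e \<in> E then g e else 0) ` (PiE E (\<lambda>_. {0..d}))"
  proof
    fix z assume z: "z \<in> base E f d"
    have "z = (\<lambda>e. if e \<in> E then restrict z E e else 0)"
      using z unfolding base_def vecs_def by auto
    moreover have "restrict z E \<in> PiE E (\<lambda>_. {0..d})"
    proof -
      have "\<forall>e\<in>E. z e \<le> d" using z finE member_le_sum[of _ E z] unfolding base_def by auto
      then show ?thesis by auto
    qed
    ultimately show "z \<in> (\<lambda>g e. if e \<in> E then g e else 0) ` (PiE E (\<lambda>_. {0..d}))" by blast
  qed
  moreover have "finite (PiE E (\<lambda>_. {0..d::nat}))" using finE by (simp add: finite_PiE)
  ultimately show ?thesis using finite_subset by blast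
qed

lemma opt_exists: "base E f d \<noteq> {} \<Longrightarrow> \<exists>x. optimal E f C t d x"
proof -
  assume ne: "base E f d \<noteq> {}"
  let ?S = "base E f d"
  have fin: "finite (cost E C t ` ?S)" using base_finite by simp
  have "Min (cost E C t ` ?S) \<in> cost E C t ` ?S" using fin ne by (intro Min_in) auto
  then obtain x where x: "x \<in> ?S" "cost E C t x = Min (cost E C t ` ?S)" by auto
  have "\<forall>y\<in>?S. cost E C t x \<le> cost E C t y" using x fin by auto
  then show ?thesis using x unfolding optimal_def by blast
qed

lemma closest:
  assumes "base E f d' \<noteq> {}"
  shows "\<exists>y. optimal E f C t' d' y \<and> (\<forall>y'. optimal E f C t' d' y' \<longrightarrow> l1dist E x y \<le> l1dist E x y')"
proof -
  obtain y0 where "optimal E f C t' d' y0" using opt_exists assms by blast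
  then show ?thesis using ex_has_least_nat[of "optimal E f C t' d'" y0 "l1dist E x"] by blast
qed

lemma nn_le1:
  assumes "\<forall>e\<in>E. (u e::nat) \<le> (if e = k then 1 else 0)" "k \<in> E"
  shows "sum u E \<le> 1"
proof -
  have "sum u E \<le> (\<Sum>e\<in>E. if e = k then 1 else 0)" using assms by (intro sum_mono) auto
  also have "\<dots> = 1" using assms finE by simp
  finally show ?thesis .
qed

lemma stepTup:
  assumes ox: "optimal E f C t d x" and kE: "k \<in> E"
  shows "\<exists>x'. optimal E f C (t(k := t k + 1)) d x' \<and> l1dist E x x' \<le> 2"
proof -
  let ?t' = "t(k := t k + 1)"
  have "base E f d \<noteq> {}" using ox unfolding optimal_def by auto
  then obtain y where oy: "optimal E f C ?t' d y"
    and ymin: "\<forall>y'. optimal E f C ?t' d y' \<longrightarrow> l1dist E x y \<le> l1dist E x y'"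
    using closest by blast
  show ?thesis
  proof (rule ccontr)
    assume "\<not> ?thesis"
    then have big: "l1dist E x y > 2" using oy by auto
    have px: "inP E f x" "sum x E = d" and py: "inP E f y" "sum y E = d"
      using ox oy unfolding optimal_def base_iff by auto
    have "\<exists>j\<in>E. x j > y j \<and> x j + t j \<ge> y j + ?t' j + 1"
    proof (rule ccontr)
      assume "\<not> ?thesis"
      then have "\<forall>e\<in>E. x e - y e \<le> (if e = k then 1 else 0)"
        by (auto split: if_splits)
      then have "(\<Sum>e\<in>E. x e - y e) \<le> 1" using nn_le1[of "\<lambda>e. x e - y e" k] kE by blast
      then show False using dist_parts[where E=E and x=x and y=y] big px py by linarith
    qed
    then obtain j where j: "x j > y j" "x j + t j \<ge> y j + ?t' j + 1" by blast
    obtain i where i: "y i > x i" "inP E f (x(j := x j - 1, i := x i + 1))"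
      "inP E f (y(i := y i - 1, j := y j + 1))"
      using exch[OF px(1) py(1) j(1)] px py by auto
    have "y i + ?t' i \<ge> x i + t i + 1" using i by auto
    then obtain y2 where "optimal E f C ?t' d y2" "l1dist E x y2 < l1dist E x y"
      using improve[OF ox oy i(1) j(1) _ j(2) i(2) i(3)] by blast
    then show False using ymin by fastforce
  qed
qed

lemma stepTdown:
  assumes ox: "optimal E f C t d x" and kE: "k \<in> E" and tk: "t k \<ge> 1"
  shows "\<exists>x'. optimal E f C (t(k := t k - 1)) d x' \<and> l1dist E x x' \<le> 2"
proof -
  let ?t' = "t(k := t k - 1)"
  have "base E f d \<noteq> {}" using ox unfolding optimal_def by auto
  then obtain y where oy: "optimal E f C ?t' d y"
    and ymin: "\<forall>y'. optimal E f C ?t' d y' \<longrightarrow> l1dist E x y \<le> l1dist E x y'"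
    using closest by blast
  show ?thesis
  proof (rule ccontr)
    assume "\<not> ?thesis"
    then have big: "l1dist E x y > 2" using oy by auto
    have px: "inP E f x" "sum x E = d" and py: "inP E f y" "sum y E = d"
      using ox oy unfolding optimal_def base_iff by auto
    have "\<exists>i\<in>E. y i > x i \<and> y i + ?t' i \<ge> x i + t i + 1"
    proof (rule ccontr)
      assume "\<not> ?thesis"
      then have "\<forall>e\<in>E. y e - x e \<le> (if e = k then 1 else 0)"
        using tk by (auto split: if_splits)
      then have "(\<Sum>e\<in>E. y e - x e) \<le> 1" using nn_le1[of "\<lambda>e. y e - x e" k] kE by blast
      then show False using dist_parts[where E=E and x=x and y=y] big px py by linarith
    qed
    then obtain i where i: "y i > x i" "y i + ?t' i \<ge> x i + t i + 1" by blast
    obtain j where j: "x j > y j" "inP E f (y(i := y i - 1, j := y j + 1))"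
      "inP E f (x(j := x j - 1, i := x i + 1))"
      using exch[OF py(1) px(1) i(1)] px py by auto
    have "x j + t j \<ge> y j + ?t' j + 1" using j by auto
    then obtain y2 where "optimal E f C ?t' d y2" "l1dist E x y2 < l1dist E x y"
      using improve[OF ox oy i(1) j(1) i(2) _ j(3) j(2)] by blast
    then show False using ymin by fastforce
  qed
qed

lemma stepDup:
  assumes ox: "optimal E f C t d x" and ne: "base E f (Suc d) \<noteq> {}"
  shows "\<exists>x'. optimal E f C t (Suc d) x' \<and> l1dist E x x' \<le> 1"
proof -
  obtain y where oy: "optimal E f C t (Suc d) y"
    and ymin: "\<forall>y'. optimal E f C t (Suc d) y' \<longrightarrow> l1dist E x y \<le> l1dist E x y'"
    using closest ne by blast
  show ?thesis
  proof (rule ccontr)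
    assume "\<not> ?thesis"
    then have big: "l1dist E x y > 1" using oy by auto
    have px: "inP E f x" "sum x E = d" and py: "inP E f y" "sum y E = Suc d"
      using ox oy unfolding optimal_def base_iff by auto
    have "\<exists>j\<in>E. x j > y j"
    proof (rule ccontr)
      assume "\<not> ?thesis"
      then have "(\<Sum>e\<in>E. x e - y e) = 0" by (auto simp: not_less)
      then show False using dist_parts[where E=E and x=x and y=y] big px py by linarith
    qed
    then obtain j where j: "x j > y j" by blast
    obtain i where i: "y i > x i" "inP E f (x(j := x j - 1, i := x i + 1))"
      "inP E f (y(i := y i - 1, j := y j + 1))"
      using exch[OF px(1) py(1) j(1)] px py by auto
    obtain y2 where "optimal E f C t (Suc d) y2" "l1dist E x y2 < l1dist E x y"
      using improve[OF ox oy i(1) j(1) _ _ i(2) i(3)] i j by fastforce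
    then show False using ymin by fastforce
  qed
qed

lemma stepDdown:
  assumes ox: "optimal E f C t (Suc d) x" and ne: "base E f d \<noteq> {}"
  shows "\<exists>x'. optimal E f C t d x' \<and> l1dist E x x' \<le> 1"
proof -
  obtain y where oy: "optimal E f C t d y"
    and ymin: "\<forall>y'. optimal E f C t d y' \<longrightarrow> l1dist E x y \<le> l1dist E x y'"
    using closest ne by blast
  show ?thesis
  proof (rule ccontr)
    assume "\<not> ?thesis"
    then have big: "l1dist E x y > 1" using oy by auto
    have px: "inP E f x" "sum x E = Suc d" and py: "inP E f y" "sum y E = d"
      using ox oy unfolding optimal_def base_iff by auto
    have "\<exists>i\<in>E. y i > x i"
    proof (rule ccontr)
      assume "\<not> ?thesis"
      then have "(\<Sum>e\<in>E. y e - x e) = 0" by (auto simp: not_less)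
      then show False using dist_parts[where E=E and x=x and y=y] big px py by linarith
    qed
    then obtain i where i: "y i > x i" by blast
    obtain j where j: "x j > y j" "inP E f (y(i := y i - 1, j := y j + 1))"
      "inP E f (x(j := x j - 1, i := x i + 1))"
      using exch[OF py(1) px(1) i(1)] px py by auto
    obtain y2 where "optimal E f C t d y2" "l1dist E x y2 < l1dist E x y"
      using improve[OF ox oy i(1) j(1) _ _ j(3) j(2)] i j by fastforce
    then show False using ymin by fastforce
  qed
qed

end



context pm
begin

lemma base_down:
  assumes "base E f (Suc m) \<noteq> {}" shows "base E f m \<noteq> {}"
proof -
  obtain z where z: "inP E f z" "sum z E = Suc m" using assms base_iff by blast
  have "\<exists>k\<in>E. z k > 0"
  proof (rule ccontr)
    assume "\<not> ?thesis"
    then have "sum z E = 0" by auto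
    then show False using z by simp
  qed
  then obtain k where k: "k \<in> E" "z k > 0" by blast
  let ?z = "z(k := z k - 1)"
  have le: "?z e \<le> z e" for e by auto
  have "inP E f ?z" unfolding inP_def
  proof (intro conjI allI impI)
    show "?z \<in> vecs E" using z k unfolding inP_def vecs_def by auto
    fix U assume U: "U \<subseteq> E"
    have "sum ?z U \<le> sum z U" by (rule sum_mono) (rule le)
    also have "\<dots> \<le> f U" using z U unfolding inP_def by auto
    finally show "sum ?z U \<le> f U" .
  qed
  moreover have "sum ?z E = m"
  proof -
    have "sum ?z E = ?z k + sum ?z (E - {k})" using sum.remove[OF finE k(1)] by blast
    moreover have "sum z E = z k + sum z (E - {k})" using sum.remove[OF finE k(1)] by blast
    moreover have "sum ?z (E - {k}) = sum z (E - {k})" by (rule sum.cong) auto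
    ultimately show ?thesis using z k by simp
  qed
  ultimately show ?thesis using base_iff by blast
qed

lemma base_le: "base E f d' \<noteq> {} \<Longrightarrow> m \<le> d' \<Longrightarrow> base E f m \<noteq> {}"
proof (induction d')
  case 0 then show ?case by simp
next
  case (Suc d')
  show ?case
  proof (cases "m = Suc d'")
    case True then show ?thesis using Suc by simp
  next
    case False then show ?thesis using Suc base_down by simp
  qed
qed

lemma Tgen:
  "\<And>t x. optimal E f C t d x \<Longrightarrow> l1dist E t t' = n
     \<Longrightarrow> \<exists>x'. optimal E f C t' d x' \<and> l1dist E x x' \<le> 2 * n"
proof (induction n)
  case 0
  then have "\<forall>e\<in>E. t e = t' e" using finE unfolding l1dist_def by simp
  then have "\<forall>z. cost E C t z = cost E C t' z" unfolding cost_def by simp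
  then have "optimal E f C t' d x" using 0 unfolding optimal_def by simp
  then show ?case by (intro exI[of _ x]) (simp add: l1dist_def)
next
  case (Suc n)
  have "\<exists>k\<in>E. t k \<noteq> t' k"
  proof (rule ccontr)
    assume "\<not> ?thesis"
    then have "l1dist E t t' = 0" unfolding l1dist_def by simp
    then show False using Suc by simp
  qed
  then obtain k where k: "k \<in> E" "t k \<noteq> t' k" by blast
  show ?case
  proof (cases "t k < t' k")
    case True
    obtain x1 where x1: "optimal E f C (t(k := t k + 1)) d x1" "l1dist E x x1 \<le> 2"
      using stepTup[OF Suc.prems(1) k(1)] by blast
    have "l1dist E (t(k := t k + 1)) t' = n" using tdist_up[of E k t t', OF finE k(1) True] Suc.prems by simp
    then obtain x' where x': "optimal E f C t' d x'" "l1dist E x1 x' \<le> 2 * n"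
      using Suc.IH[OF x1(1)] by blast
    have "l1dist E x x' \<le> 2 * Suc n" using l1dist_tri[of E x x' x1] x1 x' by simp
    then show ?thesis using x' by blast
  next
    case False
    then have gt: "t k > t' k" using k by simp
    obtain x1 where x1: "optimal E f C (t(k := t k - 1)) d x1" "l1dist E x x1 \<le> 2"
      using stepTdown[OF Suc.prems(1) k(1)] gt by auto
    have "l1dist E (t(k := t k - 1)) t' = n" using tdist_down[of E k t' t, OF finE k(1) gt] Suc.prems by simp
    then obtain x' where x': "optimal E f C t' d x'" "l1dist E x1 x' \<le> 2 * n"
      using Suc.IH[OF x1(1)] by blast
    have "l1dist E x x' \<le> 2 * Suc n" using l1dist_tri[of E x x' x1] x1 x' by simp
    then show ?thesis using x' by blast
  qed
qed

lemma Dgen: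
  "\<And>d x. optimal E f C t d x \<Longrightarrow> base E f d' \<noteq> {} \<Longrightarrow> (d' - d) + (d - d') = n
     \<Longrightarrow> \<exists>x'. optimal E f C t d' x' \<and> l1dist E x x' \<le> n"
proof (induction n)
  case 0
  then have "d = d'" by simp
  then show ?case using 0 by (intro exI[of _ x]) (simp add: l1dist_def)
next
  case (Suc n)
  show ?case
  proof (cases "d < d'")
    case True
    have "base E f (Suc d) \<noteq> {}" using base_le[OF Suc.prems(2)] True by simp
    then obtain x1 where x1: "optimal E f C t (Suc d) x1" "l1dist E x x1 \<le> 1"
      using stepDup[OF Suc.prems(1)] by blast
    have "(d' - Suc d) + (Suc d - d') = n" using Suc.prems True by simp
    then obtain x' where x': "optimal E f C t d' x'" "l1dist E x1 x' \<le> n"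
      using Suc.IH[OF x1(1) Suc.prems(2)] by blast
    have "l1dist E x x' \<le> Suc n" using l1dist_tri[of E x x' x1] x1 x' by simp
    then show ?thesis using x' by blast
  next
    case False
    then obtain d0 where d0: "d = Suc d0" using Suc.prems by (cases d) auto
    have "base E f d0 \<noteq> {}" using Suc.prems(1) d0 base_down unfolding optimal_def by blast
    then obtain x1 where x1: "optimal E f C t d0 x1" "l1dist E x x1 \<le> 1"
      using stepDdown Suc.prems(1) d0 by blast
    have "(d' - d0) + (d0 - d') = n" using Suc.prems False d0 by simp
    then obtain x' where x': "optimal E f C t d' x'" "l1dist E x1 x' \<le> n"
      using Suc.IH[OF x1(1) Suc.prems(2)] by blast
    have "l1dist E x x' \<le> Suc n" using l1dist_tri[of E x x' x1] x1 x' by simp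
    then show ?thesis using x' by blast
  qed
qed

end

theorem theorem3p5:
  fixes E :: "'a set" and f :: "'a set \<Rightarrow> nat" and C :: "'a \<Rightarrow> nat \<Rightarrow> nat \<Rightarrow> real"
    and D :: "nat set"
  assumes "finite E" and "E \<noteq> {}"
    and "polymatroid_rank E f"
    and "\<And>e. e \<in> E \<Longrightarrow> regular (C e)"
    and "\<And>e x t. e \<in> E \<Longrightarrow> C e x t \<ge> 0"
    and "\<And>d. d \<in> D \<Longrightarrow> base E f d \<noteq> {}"
  shows "\<forall>t \<in> vecs E. \<forall>d \<in> D. \<forall>x. optimal E f C t d x \<longrightarrow>
           (\<forall>d' \<in> D. \<forall>t' \<in> vecs E. \<exists>x'. optimal E f C t' d' x' \<and>
              real (l1dist E x x') \<le> 2 * real (l1dist E t t') + \<bar>real d - real d'\<bar>)"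
proof (intro ballI allI impI)
  interpret pm E f C using assms(1,3,4) by unfold_locales auto
  fix t d x d' t'
  assume t: "t \<in> vecs E" and d: "d \<in> D" and ox: "optimal E f C t d x" and d': "d' \<in> D" and t': "t' \<in> vecs E"
  obtain x1 where x1: "optimal E f C t' d x1" "l1dist E x x1 \<le> 2 * l1dist E t t'"
    using Tgen[OF ox refl] by blast
  obtain x' where x': "optimal E f C t' d' x'" "l1dist E x1 x' \<le> (d' - d) + (d - d')"
    using Dgen[OF x1(1) assms(6)[OF d'] refl] by blast
  have "l1dist E x x' \<le> 2 * l1dist E t t' + ((d' - d) + (d - d'))"
    using l1dist_tri[of E x x' x1] x1 x' by simp
  then have "real (l1dist E x x') \<le> real (2 * l1dist E t t' + ((d' - d) + (d - d')))" by linarith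
  also have "\<dots> = 2 * real (l1dist E t t') + \<bar>real d - real d'\<bar>"
    by (cases "d \<le> d'") (auto simp: of_nat_diff)
  finally show "\<exists>x'. optimal E f C t' d' x' \<and>
              real (l1dist E x x') \<le> 2 * real (l1dist E t t') + \<bar>real d - real d'\<bar>" using x' by blast
qed


end
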